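(* For every $n\ge 4$, $$\mathrm{bdim}(P_n)=\mathrm{bdim}(C_n)=\left\lfloor \frac{2n+2}{5}\right\rfloor,$$ where $P_n$ and $C_n$ are the path and the cycle on $n$ vertices.
   Context: $d(x,y)$ is the distance in $G$. For an integer $k\ge1$ let $d_k(x,y)=\min\{d(x,y),k+1\}$. A function $f:V(G)\to\mathbb{Z}_{\ge 0}$ is a resolving broadcast of $G$ if for all distinct $x,y\in V(G)$ there is $z\in V(G)$ with $f(z)=i>0$ and $d_i(x,z)\ne d_i(y,z)$. The broadcast dimension $\mathrm{bdim}(G)$ is the minimum of $\sum_{v\in V(G)}f(v)$ over all resolving broadcasts $f$ of $G$. *)

theory Defs
  imports Main
begin

text \<open>A graph is given by a vertex set V and a symmetric irreflexive adjacency
relation E.  The distance is the length of a shortest walk inside V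
(all graphs used below are finite and connected).\<close>

definition is_walk :: "'a set \<Rightarrow> ('a \<Rightarrow> 'a \<Rightarrow> bool) \<Rightarrow> 'a list \<Rightarrow> 'a \<Rightarrow> 'a \<Rightarrow> nat \<Rightarrow> bool" where
  "is_walk V E p x y k \<longleftrightarrow> length p = Suc k \<and> set p \<subseteq> V \<and> hd p = x \<and> last p = y
     \<and> (\<forall>i<k. E (p ! i) (p ! Suc i))"

definition gdist :: "'a set \<Rightarrow> ('a \<Rightarrow> 'a \<Rightarrow> bool) \<Rightarrow> 'a \<Rightarrow> 'a \<Rightarrow> nat" where
  "gdist V E x y = (LEAST k. \<exists>p. is_walk V E p x y k)"

definition tdist :: "'a set \<Rightarrow> ('a \<Rightarrow> 'a \<Rightarrow> bool) \<Rightarrow> nat \<Rightarrow> 'a \<Rightarrow> 'a \<Rightarrow> nat" where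
  "tdist V E k x y = min (gdist V E x y) (k + 1)"

definition resolving_broadcast :: "'a set \<Rightarrow> ('a \<Rightarrow> 'a \<Rightarrow> bool) \<Rightarrow> ('a \<Rightarrow> nat) \<Rightarrow> bool" where
  "resolving_broadcast V E f \<longleftrightarrow>
     (\<forall>x\<in>V. \<forall>y\<in>V. x \<noteq> y \<longrightarrow>
        (\<exists>z\<in>V. f z > 0 \<and> tdist V E (f z) x z \<noteq> tdist V E (f z) y z))"

definition bdim :: "'a set \<Rightarrow> ('a \<Rightarrow> 'a \<Rightarrow> bool) \<Rightarrow> nat" where
  "bdim V E = (LEAST s. \<exists>f. resolving_broadcast V E f \<and> (\<Sum>v\<in>V. f v) = s)"

definition path_adj :: "nat \<Rightarrow> nat \<Rightarrow> nat \<Rightarrow> bool" where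
  "path_adj n u v \<longleftrightarrow> u < n \<and> v < n \<and> (v = u + 1 \<or> u = v + 1)"

definition cycle_adj :: "nat \<Rightarrow> nat \<Rightarrow> nat \<Rightarrow> bool" where
  "cycle_adj n u v \<longleftrightarrow> u < n \<and> v < n \<and> u \<noteq> v \<and> (v = (u + 1) mod n \<or> u = (v + 1) mod n)"

end

theory Submission
  imports Defs
begin


lemma gdist_walk:
  assumes "\<exists>p k. is_walk V E p x y k"
  shows "\<exists>p. is_walk V E p x y (gdist V E x y)"
proof -
  from assms have "\<exists>k. \<exists>p. is_walk V E p x y k" by blast
  then show ?thesis unfolding gdist_def by (rule LeastI_ex)
qed

lemma gdist_le: "is_walk V E p x y k \<Longrightarrow> gdist V E x y \<le> k"
  unfolding gdist_def by (metis (mono_tags, lifting) Least_le)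

lemma walk_conn:
  assumes E: "\<And>u. Suc u < n \<Longrightarrow> E u (Suc u) \<and> E (Suc u) u"
    and x: "x < n" and y: "y < n"
  shows "\<exists>p k. is_walk {0..<n} E p x y k"
proof (cases "x \<le> y")
  case True
  let ?p = "map (\<lambda>i. x + i) [0..<Suc (y-x)]"
  have "\<forall>i<y-x. E (?p ! i) (?p ! Suc i)"
  proof (intro allI impI)
    fix i assume "i < y - x"
    then have "Suc (x + i) < n" using y by auto
    then show "E (?p ! i) (?p ! Suc i)" using E[of "x + i"] \<open>i < y - x\<close> by (simp del: upt_Suc)
  qed
  moreover have "set ?p \<subseteq> {0..<n}" using y True by auto
  ultimately have "is_walk {0..<n} E ?p x y (y-x)"
    unfolding is_walk_def using True x y
    by (auto simp: last_map hd_map simp del: upt_Suc)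
  then show ?thesis by blast
next
  case False
  let ?p = "map (\<lambda>i. x - i) [0..<Suc (x-y)]"
  have "\<forall>i<x-y. E (?p ! i) (?p ! Suc i)"
  proof (intro allI impI)
    fix i assume "i < x - y"
    then have "x - i = Suc (x - Suc i)" "Suc (x - Suc i) < n" using x by auto
    then show "E (?p ! i) (?p ! Suc i)" using E[of "x - Suc i"] \<open>i < x - y\<close> by (simp del: upt_Suc)
  qed
  moreover have "set ?p \<subseteq> {0..<n}" using x by auto
  ultimately have "is_walk {0..<n} E ?p x y (x-y)"
    unfolding is_walk_def using False x y
    by (auto simp: last_map hd_map simp del: upt_Suc)
  then show ?thesis by blast
qed

lemma walk_mod:
  assumes st: "\<And>u v. E u v \<Longrightarrow> \<exists>t\<in>{1,-1::int}. int v mod int n = (int u + t) mod int n"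
    and w: "is_walk V E p x y k"
  shows "\<exists>t. \<bar>t\<bar> \<le> int k \<and> int y mod int n = (int x + t) mod int n"
proof -
  have len: "length p = Suc k" and hp: "hd p = x" and lp: "last p = y"
    and ed: "\<forall>i<k. E (p ! i) (p ! Suc i)" using w unfolding is_walk_def by auto
  have "\<forall>i\<le>k. \<exists>t. \<bar>t\<bar> \<le> int i \<and> int (p!i) mod int n = (int (p!0) + t) mod int n"
  proof (intro allI impI)
    fix i show "i \<le> k \<Longrightarrow> \<exists>t. \<bar>t\<bar> \<le> int i \<and> int (p!i) mod int n = (int (p!0) + t) mod int n"
    proof (induction i)
      case 0 then show ?case by (intro exI[of _ 0]) auto
    next
      case (Suc i)
      then obtain t0 where t0: "\<bar>t0\<bar> \<le> int i" "int (p!i) mod int n = (int (p!0) + t0) mod int n" by auto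
      from st ed Suc.prems obtain t where t: "t\<in>{1,-1}" "int (p!Suc i) mod int n = (int (p!i) + t) mod int n"
        by (meson Suc_le_lessD)
      have "int (p!Suc i) mod int n = (int (p!i) mod int n + t) mod int n" using t(2) by (simp add: mod_add_left_eq)
      also have "\<dots> = (int (p!0) + t0 + t) mod int n" using t0(2) by (simp add: mod_add_left_eq)
      finally show ?case using t0(1) t(1) by (intro exI[of _ "t0+t"]) (auto simp: algebra_simps)
    qed
  qed
  then obtain t where "\<bar>t\<bar> \<le> int k" "int (p!k) mod int n = (int (p!0) + t) mod int n" by auto
  moreover have "p!0 = x" using hp len by (metis hd_conv_nth list.size(3) nat.distinct(1))
  moreover have "p!k = y" using lp len by (metis diff_Suc_1 last_conv_nth list.size(3) nat.distinct(1))
  ultimately show ?thesis by auto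
qed



lemma ball_card:
  assumes st: "\<And>u v. E u v \<Longrightarrow> \<exists>t\<in>{1,-1::int}. int v mod int n = (int u + t) mod int n"
    and conn: "\<And>x y. x < n \<Longrightarrow> y < n \<Longrightarrow> \<exists>p k. is_walk {0..<n} E p x y k"
    and z: "z < n"
  shows "card {x\<in>{0..<n}. gdist {0..<n} E x z \<le> r} \<le> 2*r+1"
proof -
  let ?g = "\<lambda>t. nat ((int z + t) mod int n)"
  have "{x\<in>{0..<n}. gdist {0..<n} E x z \<le> r} \<subseteq> ?g ` {-int r..int r}"
  proof
    fix x assume "x \<in> {x\<in>{0..<n}. gdist {0..<n} E x z \<le> r}"
    then have x: "x < n" and le: "gdist {0..<n} E x z \<le> r" by auto
    obtain p where "is_walk {0..<n} E p x z (gdist {0..<n} E x z)"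
      using gdist_walk[OF conn[OF x z]] by blast
    from walk_mod[OF st this] obtain t where t: "\<bar>t\<bar> \<le> int (gdist {0..<n} E x z)"
      "int z mod int n = (int x + t) mod int n" by blast
    have "(int z - t) mod int n = (int z mod int n - t) mod int n" by (simp add: mod_diff_left_eq)
    also have "\<dots> = ((int x + t) mod int n - t) mod int n" using t(2) by simp
    also have "\<dots> = int x mod int n" by (simp add: mod_diff_left_eq)
    also have "\<dots> = int x" using x by simp
    finally have "x = ?g (-t)" by simp
    moreover have "-t \<in> {-int r..int r}" using t(1) le by auto
    ultimately show "x \<in> ?g ` {-int r..int r}" by blast
  qed
  then have "card {x\<in>{0..<n}. gdist {0..<n} E x z \<le> r} \<le> card (?g ` {-int r..int r})"
    by (intro card_mono) auto
  also have "\<dots> \<le> card {-int r..int r}" by (rule card_image_le) simp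
  also have "\<dots> = 2*r+1" by simp
  finally show ?thesis .
qed

lemma card_filter_sum: "finite A \<Longrightarrow> card {x\<in>A. P x} = (\<Sum>x\<in>A. if P x then 1 else 0)"
  by (simp add: sum.If_cases Int_def)

lemma tdist_cov: "tdist V E k x z = (if gdist V E x z \<le> k then gdist V E x z else k + 1)"
  unfolding tdist_def by auto

lemma lower:
  assumes st: "\<And>u v. E u v \<Longrightarrow> \<exists>t\<in>{1,-1::int}. int v mod int n = (int u + t) mod int n"
    and conn: "\<And>x y. x < n \<Longrightarrow> y < n \<Longrightarrow> \<exists>p k. is_walk {0..<n} E p x y k"
    and rb: "resolving_broadcast {0..<n} E f"
  shows "2 * n \<le> 5 * (\<Sum>v\<in>{0..<n}. f v) + 2"
proof -
  define V where "V = {0..<n}"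
  define S where "S = {z\<in>V. 0 < f z}"
  define cov where "cov x z \<longleftrightarrow> gdist V E x z \<le> f z" for x z
  define C where "C x = {z\<in>S. cov x z}" for x
  define c where "c x = card (C x)" for x
  have finV: "finite V" and finS: "finite S" unfolding V_def S_def by auto
  have rb': "\<And>x y. x\<in>V \<Longrightarrow> y\<in>V \<Longrightarrow> x \<noteq> y \<Longrightarrow> \<exists>z\<in>S. tdist V E (f z) x z \<noteq> tdist V E (f z) y z"
    using rb unfolding resolving_broadcast_def V_def S_def by fastforce
  have td: "tdist V E (f z) x z = (if cov x z then gdist V E x z else f z + 1)" for x z
    unfolding cov_def by (rule tdist_cov)
  have U: "card {x\<in>V. c x = 0} \<le> 1"
  proof -
    have "\<forall>a\<in>{x\<in>V. c x = 0}. \<forall>b\<in>{x\<in>V. c x = 0}. a = b"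
    proof (intro ballI, rule ccontr)
      fix a b assume a: "a \<in> {x\<in>V. c x = 0}" and b: "b \<in> {x\<in>V. c x = 0}" and ne: "a \<noteq> b"
      then obtain z where z: "z\<in>S" "tdist V E (f z) a z \<noteq> tdist V E (f z) b z" using rb' by blast
      have fa: "finite (C a)" "finite (C b)" unfolding C_def using finS by auto
      have "card (C a) = 0" "card (C b) = 0" using a b unfolding c_def by auto
      then have "C a = {}" "C b = {}" using fa by auto
      then have "\<not> cov a z" "\<not> cov b z" using z(1) unfolding C_def by auto
      then show False using z(2) td by simp
    qed
    then show ?thesis using finV by (simp add: card_le_Suc0_iff_eq)
  qed
  have cx: "c x = (\<Sum>z\<in>S. if cov x z then 1 else 0)" for x
    unfolding c_def C_def using finS by (simp add: card_filter_sum)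
  have Sum1: "(\<Sum>x\<in>V. c x) \<le> (\<Sum>z\<in>S. 2 * f z + 1)"
  proof -
    have "(\<Sum>x\<in>V. c x) = (\<Sum>z\<in>S. \<Sum>x\<in>V. if cov x z then 1 else 0)"
      unfolding cx by (rule sum.swap)
    also have "\<dots> = (\<Sum>z\<in>S. card {x\<in>V. cov x z})"
      using finV by (simp add: card_filter_sum)
    also have "\<dots> \<le> (\<Sum>z\<in>S. 2 * f z + 1)"
    proof (rule sum_mono)
      fix z assume "z \<in> S"
      then have "z < n" unfolding S_def V_def by auto
      from ball_card[OF st conn this, of "f z"] show "card {x\<in>V. cov x z} \<le> 2 * f z + 1"
        unfolding cov_def V_def by simp
    qed
    finally show ?thesis .
  qed
  have Sum2: "card {x\<in>V. c x = 1} \<le> (\<Sum>z\<in>S. f z + 1)"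
  proof -
    define T where "T z = {x\<in>V. c x = 1 \<and> cov x z}" for z
    have "{x\<in>V. c x = 1} \<subseteq> (\<Union>z\<in>S. T z)"
    proof
      fix x assume "x \<in> {x\<in>V. c x = 1}"
      then have "x \<in> V" "card (C x) = 1" unfolding c_def by auto
      then obtain z where "C x = {z}" by (auto simp: card_Suc_eq)
      then show "x \<in> (\<Union>z\<in>S. T z)" using \<open>x\<in>V\<close> \<open>card (C x) = 1\<close>
        unfolding T_def C_def c_def by auto
    qed
    then have "card {x\<in>V. c x = 1} \<le> card (\<Union>z\<in>S. T z)"
      using finV finS unfolding T_def by (intro card_mono) auto
    also have "\<dots> \<le> (\<Sum>z\<in>S. card (T z))" by (rule card_UN_le[OF finS])
    also have "\<dots> \<le> (\<Sum>z\<in>S. f z + 1)"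
    proof (rule sum_mono)
      fix z assume zS: "z \<in> S"
      have inj: "inj_on (\<lambda>x. gdist V E x z) (T z)"
      proof (rule inj_onI, rule ccontr)
        fix x y assume x: "x \<in> T z" and y: "y \<in> T z" and eq: "gdist V E x z = gdist V E y z"
          and ne: "x \<noteq> y"
        have Cx: "C x = {z}"
        proof -
          have t1: "c x = 1" and t2: "cov x z" using x unfolding T_def by auto
          have zC: "z \<in> C x" using t2 zS unfolding C_def by auto
          have c1: "card (C x) = 1" using t1 unfolding c_def .
          from c1 obtain a where a: "C x = {a}" by (rule card_1_singletonE)
          with zC have "z = a" by blast
          with a show ?thesis by blast
        qed
        have Cy: "C y = {z}"
        proof -
          have t1: "c y = 1" and t2: "cov y z" using y unfolding T_def by auto
          have zC: "z \<in> C y" using t2 zS unfolding C_def by auto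
          have c1: "card (C y) = 1" using t1 unfolding c_def .
          from c1 obtain a where a: "C y = {a}" by (rule card_1_singletonE)
          with zC have "z = a" by blast
          with a show ?thesis by blast
        qed
        from x y ne obtain w where w: "w\<in>S" "tdist V E (f w) x w \<noteq> tdist V E (f w) y w"
          using rb' unfolding T_def by blast
        show False
        proof (cases "w = z")
          case True
          have "tdist V E (f z) x z = tdist V E (f z) y z" unfolding tdist_def using eq by simp
          then show False using w(2) unfolding True by simp
        next
          case False
          then have "\<not> cov x w" "\<not> cov y w" using Cx Cy w(1) unfolding C_def by auto
          then show False using w(2) td by simp
        qed
      qed
      have sub: "(\<lambda>x. gdist V E x z) ` T z \<subseteq> {0..f z}" unfolding T_def cov_def by auto
      have "card ((\<lambda>x. gdist V E x z) ` T z) \<le> f z + 1"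
        using card_mono[OF finite_atLeastAtMost sub] by simp
      then show "card (T z) \<le> f z + 1" using card_image[OF inj] by simp
    qed
    finally show ?thesis .
  qed
  have fS: "(\<Sum>v\<in>V. f v) = (\<Sum>z\<in>S. f z)"
    unfolding S_def using finV by (intro sum.mono_neutral_right) auto
  have up: "(\<Sum>x\<in>V. c x + (if c x = 1 then 1 else 0)) \<le> 5 * (\<Sum>v\<in>V. f v)"
  proof -
    have "(\<Sum>x\<in>V. c x + (if c x = 1 then 1 else 0)) = (\<Sum>x\<in>V. c x) + card {x\<in>V. c x = 1}"
      using finV by (simp add: sum.distrib card_filter_sum)
    also have "\<dots> \<le> (\<Sum>z\<in>S. 2 * f z + 1) + (\<Sum>z\<in>S. f z + 1)" using Sum1 Sum2 by simp
    also have "\<dots> = (\<Sum>z\<in>S. 3 * f z + 2)" by (simp add: sum.distrib[symmetric])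
    also have "\<dots> \<le> (\<Sum>z\<in>S. 5 * f z)" by (rule sum_mono) (auto simp: S_def)
    also have "\<dots> = 5 * (\<Sum>v\<in>V. f v)" by (simp add: fS sum_distrib_left)
    finally show ?thesis .
  qed
  have lo: "2 * card {x\<in>V. c x \<noteq> 0} \<le> (\<Sum>x\<in>V. c x + (if c x = 1 then 1 else 0))"
  proof -
    have "2 * card {x\<in>V. c x \<noteq> 0} = 2 * (\<Sum>x\<in>V. if c x \<noteq> 0 then 1 else 0)"
      using card_filter_sum[OF finV] by simp
    also have "\<dots> = (\<Sum>x\<in>V. 2 * (if c x \<noteq> 0 then 1 else 0))"
      by (rule sum_distrib_left)
    also have "\<dots> \<le> (\<Sum>x\<in>V. c x + (if c x = 1 then 1 else 0))"
      by (rule sum_mono) auto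
    finally show ?thesis .
  qed
  have "card {x\<in>V. c x \<noteq> 0} + card {x\<in>V. c x = 0} = n"
  proof -
    have "card {x\<in>V. c x \<noteq> 0} + card {x\<in>V. c x = 0}
       = (\<Sum>x\<in>V. if c x \<noteq> 0 then 1 else 0) + (\<Sum>x\<in>V. if c x = 0 then 1 else 0)"
      using card_filter_sum[OF finV] by simp
    also have "\<dots> = (\<Sum>x\<in>V. (if c x \<noteq> 0 then 1 else 0) + (if c x = 0 then 1 else 0))"
      by (rule sum.distrib[symmetric])
    also have "\<dots> = (\<Sum>x\<in>V. 1)" by (rule sum.cong) auto
    also have "\<dots> = n" unfolding V_def by simp
    finally show ?thesis .
  qed
  then show ?thesis using U up lo unfolding V_def by linarith
qed



definition tierP :: "nat \<Rightarrow> nat \<Rightarrow> nat" where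
  "tierP x z = (if x = z then 0 else if z = x+1 \<or> x = z+1 then 1 else 2)"

definition tierC :: "nat \<Rightarrow> nat \<Rightarrow> nat \<Rightarrow> nat" where
  "tierC n x z = (if x = z then 0 else if z = x+1 \<or> x = z+1 \<or> (x = 0 \<and> z + 1 = n) \<or> (z = 0 \<and> x + 1 = n) then 1 else 2)"

definition Fb :: "nat \<Rightarrow> nat \<Rightarrow> bool" where
  "Fb n x \<longleftrightarrow> ((x mod 5 = 1 \<or> x mod 5 = 3) \<and> \<not>(n mod 5 = 3 \<and> x + 2 = n)) \<or> (n mod 5 = 3 \<and> x + 1 = n)"

lemma comb_0:
  assumes n: "5 \<le> n" and xy: "x < y" and yn: "y < n" and h: "y \<ge> x + 3" "x mod 5 = 0"
  shows "\<exists>z<n. Fb n z \<and> tierP x z \<noteq> tierP y z \<and> tierC n x z \<noteq> tierC n y z"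
proof -
  have m: "(x+1) mod 5 = 1" using h by presburger
  have a: "x+1 < n" using n xy yn h by linarith
  have m1: "(x+1 + 1) mod 5 = ((x+1) mod 5 + 1) mod 5" by presburger
  have m2: "(x+1 + 2) mod 5 = ((x+1) mod 5 + 2) mod 5" by presburger
  have b: "Fb n (x+1)" unfolding Fb_def using m m1 m2 n xy yn h by auto
  have c: "tierP x (x+1) \<noteq> tierP y (x+1)" unfolding tierP_def using n xy yn h by simp
  have d: "tierC n x (x+1) \<noteq> tierC n y (x+1)" unfolding tierC_def using n xy yn h by simp
  show ?thesis using a b c d by blast
qed

lemma comb_1:
  assumes n: "5 \<le> n" and xy: "x < y" and yn: "y < n" and h: "y \<ge> x + 3" "x mod 5 = 1"
  shows "\<exists>z<n. Fb n z \<and> tierP x z \<noteq> tierP y z \<and> tierC n x z \<noteq> tierC n y z"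
proof -
  have m: "(x) mod 5 = 1" using h by presburger
  have a: "x < n" using n xy yn h by linarith
  have m1: "(x + 1) mod 5 = ((x) mod 5 + 1) mod 5" by presburger
  have m2: "(x + 2) mod 5 = ((x) mod 5 + 2) mod 5" by presburger
  have b: "Fb n (x)" unfolding Fb_def using m m1 m2 n xy yn h by auto
  have c: "tierP x (x) \<noteq> tierP y (x)" unfolding tierP_def using n xy yn h by simp
  have d: "tierC n x (x) \<noteq> tierC n y (x)" unfolding tierC_def using n xy yn h by simp
  show ?thesis using a b c d by blast
qed

lemma comb_2:
  assumes n: "5 \<le> n" and xy: "x < y" and yn: "y < n" and h: "y \<ge> x + 3" "x mod 5 = 2"
  shows "\<exists>z<n. Fb n z \<and> tierP x z \<noteq> tierP y z \<and> tierC n x z \<noteq> tierC n y z"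
proof -
  have m: "(x+1) mod 5 = 3" using h by presburger
  have a: "x+1 < n" using n xy yn h by linarith
  have m1: "(x+1 + 1) mod 5 = ((x+1) mod 5 + 1) mod 5" by presburger
  have m2: "(x+1 + 2) mod 5 = ((x+1) mod 5 + 2) mod 5" by presburger
  have b: "Fb n (x+1)" unfolding Fb_def using m m1 m2 n xy yn h by auto
  have c: "tierP x (x+1) \<noteq> tierP y (x+1)" unfolding tierP_def using n xy yn h by simp
  have d: "tierC n x (x+1) \<noteq> tierC n y (x+1)" unfolding tierC_def using n xy yn h by simp
  show ?thesis using a b c d by blast
qed

lemma comb_3:
  assumes n: "5 \<le> n" and xy: "x < y" and yn: "y < n" and h: "y \<ge> x + 3" "x mod 5 = 3"
  shows "\<exists>z<n. Fb n z \<and> tierP x z \<noteq> tierP y z \<and> tierC n x z \<noteq> tierC n y z"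
proof -
  have m: "(x) mod 5 = 3" using h by presburger
  have a: "x < n" using n xy yn h by linarith
  have m1: "(x + 1) mod 5 = ((x) mod 5 + 1) mod 5" by presburger
  have m2: "(x + 2) mod 5 = ((x) mod 5 + 2) mod 5" by presburger
  have b: "Fb n (x)" unfolding Fb_def using m m1 m2 n xy yn h by auto
  have c: "tierP x (x) \<noteq> tierP y (x)" unfolding tierP_def using n xy yn h by simp
  have d: "tierC n x (x) \<noteq> tierC n y (x)" unfolding tierC_def using n xy yn h by simp
  show ?thesis using a b c d by blast
qed

lemma comb_4:
  assumes n: "5 \<le> n" and xy: "x < y" and yn: "y < n" and h: "y \<ge> x + 3" "x mod 5 = 4"
  shows "\<exists>z<n. Fb n z \<and> tierP x z \<noteq> tierP y z \<and> tierC n x z \<noteq> tierC n y z"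
proof -
  define u where "u = x - 1"
  have u: "x = u + 1" using h unfolding u_def by presburger
  have m: "(u) mod 5 = 3" using h u by presburger
  have a: "u < n" using n xy yn h u by linarith
  have m1: "(u + 1) mod 5 = ((u) mod 5 + 1) mod 5" by presburger
  have m2: "(u + 2) mod 5 = ((u) mod 5 + 2) mod 5" by presburger
  have b: "Fb n (u)" unfolding Fb_def using m m1 m2 n xy yn h u by auto
  have c: "tierP x (u) \<noteq> tierP y (u)" unfolding tierP_def using n xy yn h u by simp
  have d: "tierC n x (u) \<noteq> tierC n y (u)" unfolding tierC_def using n xy yn h(1) u m by auto
  show ?thesis using a b c d by blast
qed

lemma comb_5:
  assumes n: "5 \<le> n" and xy: "x < y" and yn: "y < n" and h: "y = x + 1" "x mod 5 = 0" "n mod 5 = 3 \<and> x + 3 = n"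
  shows "\<exists>z<n. Fb n z \<and> tierP x z \<noteq> tierP y z \<and> tierC n x z \<noteq> tierC n y z"
proof -
  have m: "(x+2) mod 5 = 2" using h by presburger
  have a: "x+2 < n" using n xy yn h by linarith
  have m1: "(x+2 + 1) mod 5 = ((x+2) mod 5 + 1) mod 5" by presburger
  have m2: "(x+2 + 2) mod 5 = ((x+2) mod 5 + 2) mod 5" by presburger
  have b: "Fb n (x+2)" unfolding Fb_def using m m1 m2 n xy yn h by auto
  have c: "tierP x (x+2) \<noteq> tierP y (x+2)" unfolding tierP_def using n xy yn h by simp
  have d: "tierC n x (x+2) \<noteq> tierC n y (x+2)" unfolding tierC_def using n xy yn h by simp
  show ?thesis using a b c d by blast
qed

lemma comb_6:
  assumes n: "5 \<le> n" and xy: "x < y" and yn: "y < n" and h: "y = x + 1" "x mod 5 = 0" "\<not>(n mod 5 = 3 \<and> x + 3 = n)"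
  shows "\<exists>z<n. Fb n z \<and> tierP x z \<noteq> tierP y z \<and> tierC n x z \<noteq> tierC n y z"
proof -
  have m: "(x+1) mod 5 = 1" using h by presburger
  have a: "x+1 < n" using n xy yn h by linarith
  have m1: "(x+1 + 1) mod 5 = ((x+1) mod 5 + 1) mod 5" by presburger
  have m2: "(x+1 + 2) mod 5 = ((x+1) mod 5 + 2) mod 5" by presburger
  have b: "Fb n (x+1)" unfolding Fb_def using m m1 m2 n xy yn h by auto
  have c: "tierP x (x+1) \<noteq> tierP y (x+1)" unfolding tierP_def using n xy yn h by simp
  have d: "tierC n x (x+1) \<noteq> tierC n y (x+1)" unfolding tierC_def using n xy yn h by simp
  show ?thesis using a b c d by blast
qed

lemma comb_7:
  assumes n: "5 \<le> n" and xy: "x < y" and yn: "y < n" and h: "y = x + 1" "x mod 5 = 1" "n mod 5 = 3 \<and> x + 2 = n"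
  shows "\<exists>z<n. Fb n z \<and> tierP x z \<noteq> tierP y z \<and> tierC n x z \<noteq> tierC n y z"
proof -
  have m: "(x+1) mod 5 = 2" using h by presburger
  have a: "x+1 < n" using n xy yn h by linarith
  have m1: "(x+1 + 1) mod 5 = ((x+1) mod 5 + 1) mod 5" by presburger
  have m2: "(x+1 + 2) mod 5 = ((x+1) mod 5 + 2) mod 5" by presburger
  have b: "Fb n (x+1)" unfolding Fb_def using m m1 m2 n xy yn h by auto
  have c: "tierP x (x+1) \<noteq> tierP y (x+1)" unfolding tierP_def using n xy yn h by simp
  have d: "tierC n x (x+1) \<noteq> tierC n y (x+1)" unfolding tierC_def using n xy yn h by simp
  show ?thesis using a b c d by blast
qed

lemma comb_8:
  assumes n: "5 \<le> n" and xy: "x < y" and yn: "y < n" and h: "y = x + 1" "x mod 5 = 1" "\<not>(n mod 5 = 3 \<and> x + 2 = n)"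
  shows "\<exists>z<n. Fb n z \<and> tierP x z \<noteq> tierP y z \<and> tierC n x z \<noteq> tierC n y z"
proof -
  have m: "(x) mod 5 = 1" using h by presburger
  have a: "x < n" using n xy yn h by linarith
  have m1: "(x + 1) mod 5 = ((x) mod 5 + 1) mod 5" by presburger
  have m2: "(x + 2) mod 5 = ((x) mod 5 + 2) mod 5" by presburger
  have b: "Fb n (x)" unfolding Fb_def using m m1 m2 n xy yn h by auto
  have c: "tierP x (x) \<noteq> tierP y (x)" unfolding tierP_def using n xy yn h by simp
  have d: "tierC n x (x) \<noteq> tierC n y (x)" unfolding tierC_def using n xy yn h by simp
  show ?thesis using a b c d by blast
qed

lemma comb_9:
  assumes n: "5 \<le> n" and xy: "x < y" and yn: "y < n" and h: "y = x + 1" "x mod 5 = 2"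
  shows "\<exists>z<n. Fb n z \<and> tierP x z \<noteq> tierP y z \<and> tierC n x z \<noteq> tierC n y z"
proof -
  have m: "(x+1) mod 5 = 3" using h by presburger
  have a: "x+1 < n" using n xy yn h by linarith
  have m1: "(x+1 + 1) mod 5 = ((x+1) mod 5 + 1) mod 5" by presburger
  have m2: "(x+1 + 2) mod 5 = ((x+1) mod 5 + 2) mod 5" by presburger
  have b: "Fb n (x+1)" unfolding Fb_def using m m1 m2 n xy yn h by auto
  have c: "tierP x (x+1) \<noteq> tierP y (x+1)" unfolding tierP_def using n xy yn h by simp
  have d: "tierC n x (x+1) \<noteq> tierC n y (x+1)" unfolding tierC_def using n xy yn h by simp
  show ?thesis using a b c d by blast
qed

lemma comb_10:
  assumes n: "5 \<le> n" and xy: "x < y" and yn: "y < n" and h: "y = x + 1" "x mod 5 = 3"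
  shows "\<exists>z<n. Fb n z \<and> tierP x z \<noteq> tierP y z \<and> tierC n x z \<noteq> tierC n y z"
proof -
  have m: "(x) mod 5 = 3" using h by presburger
  have a: "x < n" using n xy yn h by linarith
  have m1: "(x + 1) mod 5 = ((x) mod 5 + 1) mod 5" by presburger
  have m2: "(x + 2) mod 5 = ((x) mod 5 + 2) mod 5" by presburger
  have b: "Fb n (x)" unfolding Fb_def using m m1 m2 n xy yn h by auto
  have c: "tierP x (x) \<noteq> tierP y (x)" unfolding tierP_def using n xy yn h by simp
  have d: "tierC n x (x) \<noteq> tierC n y (x)" unfolding tierC_def using n xy yn h by simp
  show ?thesis using a b c d by blast
qed

lemma comb_11:
  assumes n: "5 \<le> n" and xy: "x < y" and yn: "y < n" and h: "y = x + 1" "x mod 5 = 4"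
  shows "\<exists>z<n. Fb n z \<and> tierP x z \<noteq> tierP y z \<and> tierC n x z \<noteq> tierC n y z"
proof -
  define u where "u = x - 1"
  have u: "x = u + 1" using h unfolding u_def by presburger
  have m: "(u) mod 5 = 3" using h u by presburger
  have a: "u < n" using n xy yn h u by linarith
  have m1: "(u + 1) mod 5 = ((u) mod 5 + 1) mod 5" by presburger
  have m2: "(u + 2) mod 5 = ((u) mod 5 + 2) mod 5" by presburger
  have b: "Fb n (u)" unfolding Fb_def using m m1 m2 n xy yn h u by auto
  have c: "tierP x (u) \<noteq> tierP y (u)" unfolding tierP_def using n xy yn h u by simp
  have d: "tierC n x (u) \<noteq> tierC n y (u)" unfolding tierC_def using n xy yn h(1) u m by auto
  show ?thesis using a b c d by blast
qed

lemma comb_12: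
  assumes n: "5 \<le> n" and xy: "x < y" and yn: "y < n" and h: "y = x + 2" "x mod 5 = 0" "x + 3 < n"
  shows "\<exists>z<n. Fb n z \<and> tierP x z \<noteq> tierP y z \<and> tierC n x z \<noteq> tierC n y z"
proof -
  have m: "(x+3) mod 5 = 3" using h by presburger
  have a: "x+3 < n" using n xy yn h by linarith
  have m1: "(x+3 + 1) mod 5 = ((x+3) mod 5 + 1) mod 5" by presburger
  have m2: "(x+3 + 2) mod 5 = ((x+3) mod 5 + 2) mod 5" by presburger
  have b: "Fb n (x+3)" unfolding Fb_def using m m1 m2 n xy yn h by auto
  have c: "tierP x (x+3) \<noteq> tierP y (x+3)" unfolding tierP_def using n xy yn h by simp
  have d: "tierC n x (x+3) \<noteq> tierC n y (x+3)" unfolding tierC_def using n xy yn h(1) by auto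
  show ?thesis using a b c d by blast
qed

lemma comb_13:
  assumes n: "5 \<le> n" and xy: "x < y" and yn: "y < n" and h: "y = x + 2" "x mod 5 = 0" "\<not> x + 3 < n"
  shows "\<exists>z<n. Fb n z \<and> tierP x z \<noteq> tierP y z \<and> tierC n x z \<noteq> tierC n y z"
proof -
  have m: "(x+2) mod 5 = 2" using h by presburger
  have a: "x+2 < n" using n xy yn h by linarith
  have m1: "(x+2 + 1) mod 5 = ((x+2) mod 5 + 1) mod 5" by presburger
  have m2: "(x+2 + 2) mod 5 = ((x+2) mod 5 + 2) mod 5" by presburger
  have nn: "n = x + 3" using h yn by linarith
  have nm: "n mod 5 = 3" using nn h(2) by presburger
  have b: "Fb n (x+2)" unfolding Fb_def using m m1 m2 n xy yn h by (auto simp: nm)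
  have c: "tierP x (x+2) \<noteq> tierP y (x+2)" unfolding tierP_def using n xy yn h by simp
  have d: "tierC n x (x+2) \<noteq> tierC n y (x+2)" unfolding tierC_def using n xy yn h by simp
  show ?thesis using a b c d by blast
qed

lemma comb_14:
  assumes n: "5 \<le> n" and xy: "x < y" and yn: "y < n" and h: "y = x + 2" "x mod 5 = 1"
  shows "\<exists>z<n. Fb n z \<and> tierP x z \<noteq> tierP y z \<and> tierC n x z \<noteq> tierC n y z"
proof -
  have m: "(x) mod 5 = 1" using h by presburger
  have a: "x < n" using n xy yn h by linarith
  have m1: "(x + 1) mod 5 = ((x) mod 5 + 1) mod 5" by presburger
  have m2: "(x + 2) mod 5 = ((x) mod 5 + 2) mod 5" by presburger
  have b: "Fb n (x)" unfolding Fb_def using m m1 m2 n xy yn h by auto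
  have c: "tierP x (x) \<noteq> tierP y (x)" unfolding tierP_def using n xy yn h by simp
  have d: "tierC n x (x) \<noteq> tierC n y (x)" unfolding tierC_def using n xy yn h by simp
  show ?thesis using a b c d by blast
qed

lemma comb_15:
  assumes n: "5 \<le> n" and xy: "x < y" and yn: "y < n" and h: "y = x + 2" "x mod 5 = 2"
  shows "\<exists>z<n. Fb n z \<and> tierP x z \<noteq> tierP y z \<and> tierC n x z \<noteq> tierC n y z"
proof -
  define u where "u = x - 1"
  have u: "x = u + 1" using h unfolding u_def by presburger
  have m: "(u) mod 5 = 1" using h u by presburger
  have a: "u < n" using n xy yn h u by linarith
  have m1: "(u + 1) mod 5 = ((u) mod 5 + 1) mod 5" by presburger
  have m2: "(u + 2) mod 5 = ((u) mod 5 + 2) mod 5" by presburger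
  have b: "Fb n (u)" unfolding Fb_def using m m1 m2 n xy yn h u by auto
  have c: "tierP x (u) \<noteq> tierP y (u)" unfolding tierP_def using n xy yn h u by simp
  have d: "tierC n x (u) \<noteq> tierC n y (u)" unfolding tierC_def using n xy yn h(1) u m by auto
  show ?thesis using a b c d by blast
qed

lemma comb_16:
  assumes n: "5 \<le> n" and xy: "x < y" and yn: "y < n" and h: "y = x + 2" "x mod 5 = 3"
  shows "\<exists>z<n. Fb n z \<and> tierP x z \<noteq> tierP y z \<and> tierC n x z \<noteq> tierC n y z"
proof -
  have m: "(x) mod 5 = 3" using h by presburger
  have a: "x < n" using n xy yn h by linarith
  have m1: "(x + 1) mod 5 = ((x) mod 5 + 1) mod 5" by presburger
  have m2: "(x + 2) mod 5 = ((x) mod 5 + 2) mod 5" by presburger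
  have b: "Fb n (x)" unfolding Fb_def using m m1 m2 n xy yn h by auto
  have c: "tierP x (x) \<noteq> tierP y (x)" unfolding tierP_def using n xy yn h by simp
  have d: "tierC n x (x) \<noteq> tierC n y (x)" unfolding tierC_def using n xy yn h by simp
  show ?thesis using a b c d by blast
qed

lemma comb_17:
  assumes n: "5 \<le> n" and xy: "x < y" and yn: "y < n" and h: "y = x + 2" "x mod 5 = 4"
  shows "\<exists>z<n. Fb n z \<and> tierP x z \<noteq> tierP y z \<and> tierC n x z \<noteq> tierC n y z"
proof -
  define u where "u = x - 1"
  have u: "x = u + 1" using h unfolding u_def by presburger
  have m: "(u) mod 5 = 3" using h u by presburger
  have a: "u < n" using n xy yn h u by linarith
  have m1: "(u + 1) mod 5 = ((u) mod 5 + 1) mod 5" by presburger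
  have m2: "(u + 2) mod 5 = ((u) mod 5 + 2) mod 5" by presburger
  have b: "Fb n (u)" unfolding Fb_def using m m1 m2 n xy yn h u by auto
  have c: "tierP x (u) \<noteq> tierP y (u)" unfolding tierP_def using n xy yn h u by simp
  have d: "tierC n x (u) \<noteq> tierC n y (u)" unfolding tierC_def using n xy yn h(1) u m by auto
  show ?thesis using a b c d by blast
qed



lemma comb:
  assumes n: "5 \<le> n" and xy: "x < y" and yn: "y < n"
  shows "\<exists>z<n. Fb n z \<and> tierP x z \<noteq> tierP y z \<and> tierC n x z \<noteq> tierC n y z"
proof -
  have r: "x mod 5 = 0 \<or> x mod 5 = 1 \<or> x mod 5 = 2 \<or> x mod 5 = 3 \<or> x mod 5 = 4" by presburger
  consider (a) "y \<ge> x+3" | (b) "y = x+1" | (c) "y = x+2" using xy by linarith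
  then show ?thesis
  proof cases
    case a
    from r show ?thesis
    proof (elim disjE)
      assume "x mod 5 = 0" then show ?thesis by (rule comb_0[OF n xy yn a])
    next
      assume "x mod 5 = 1" then show ?thesis by (rule comb_1[OF n xy yn a])
    next
      assume "x mod 5 = 2" then show ?thesis by (rule comb_2[OF n xy yn a])
    next
      assume "x mod 5 = 3" then show ?thesis by (rule comb_3[OF n xy yn a])
    next
      assume "x mod 5 = 4" then show ?thesis by (rule comb_4[OF n xy yn a])
    qed
  next
    case b
    from r show ?thesis
    proof (elim disjE)
      assume h: "x mod 5 = 0"
      show ?thesis
      proof (cases "n mod 5 = 3 \<and> x + 3 = n")
        case True then show ?thesis by (rule comb_5[OF n xy yn b h])
      next
        case False then show ?thesis by (rule comb_6[OF n xy yn b h])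
      qed
    next
      assume h: "x mod 5 = 1"
      show ?thesis
      proof (cases "n mod 5 = 3 \<and> x + 2 = n")
        case True then show ?thesis by (rule comb_7[OF n xy yn b h])
      next
        case False then show ?thesis by (rule comb_8[OF n xy yn b h])
      qed
    next
      assume "x mod 5 = 2" then show ?thesis by (rule comb_9[OF n xy yn b])
    next
      assume "x mod 5 = 3" then show ?thesis by (rule comb_10[OF n xy yn b])
    next
      assume "x mod 5 = 4" then show ?thesis by (rule comb_11[OF n xy yn b])
    qed
  next
    case c
    from r show ?thesis
    proof (elim disjE)
      assume h: "x mod 5 = 0"
      show ?thesis
      proof (cases "x + 3 < n")
        case True then show ?thesis by (rule comb_12[OF n xy yn c h])
      next
        case False then show ?thesis by (rule comb_13[OF n xy yn c h])
      qed
    next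
      assume "x mod 5 = 1" then show ?thesis by (rule comb_14[OF n xy yn c])
    next
      assume "x mod 5 = 2" then show ?thesis by (rule comb_15[OF n xy yn c])
    next
      assume "x mod 5 = 3" then show ?thesis by (rule comb_16[OF n xy yn c])
    next
      assume "x mod 5 = 4" then show ?thesis by (rule comb_17[OF n xy yn c])
    qed
  qed
qed

lemma comb4:
  assumes xy: "x < y" and yn: "y < (4::nat)"
  shows "\<exists>z<4. z \<le> 1 \<and> tierP x z \<noteq> tierP y z \<and> tierC 4 x z \<noteq> tierC 4 y z"
proof -
  have "(x = 0 \<and> (y = 1 \<or> y = 2 \<or> y = 3)) \<or> (x = 1 \<and> (y = 2 \<or> y = 3)) \<or> (x = 2 \<and> y = 3)"
    using xy yn by auto
  then show ?thesis
    by (elim disjE conjE) (auto simp: tierP_def tierC_def intro: exI[of _ 0] exI[of _ 1])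
qed

lemma path_step: "path_adj n u v \<Longrightarrow> \<exists>t\<in>{1,-1::int}. int v mod int n = (int u + t) mod int n"
  unfolding path_adj_def by auto

lemma cycle_step: "cycle_adj n u v \<Longrightarrow> \<exists>t\<in>{1,-1::int}. int v mod int n = (int u + t) mod int n"
proof -
  assume "cycle_adj n u v"
  then have "v = (u + 1) mod n \<or> u = (v + 1) mod n" unfolding cycle_adj_def by auto
  then show ?thesis
  proof
    assume "v = (u + 1) mod n"
    then have "int v mod int n = (int u + 1) mod int n" by (simp add: zmod_int ac_simps)
    then show ?thesis by auto
  next
    assume "u = (v + 1) mod n"
    then have "int u mod int n = (int v + 1) mod int n" by (simp add: zmod_int ac_simps)
    then have "(int u + -1) mod int n = (int v + 1 + -1) mod int n" by (metis mod_add_left_eq)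
    then show ?thesis by auto
  qed
qed

lemma path_E: "Suc u < n \<Longrightarrow> path_adj n u (Suc u) \<and> path_adj n (Suc u) u"
  unfolding path_adj_def by auto

lemma cycle_E: "Suc u < n \<Longrightarrow> cycle_adj n u (Suc u) \<and> cycle_adj n (Suc u) u"
  unfolding cycle_adj_def by auto

lemma path_conn: "x < n \<Longrightarrow> y < n \<Longrightarrow> \<exists>p k. is_walk {0..<n} (path_adj n) p x y k"
  by (rule walk_conn) (auto simp: path_adj_def)

lemma cycle_conn: "x < n \<Longrightarrow> y < n \<Longrightarrow> \<exists>p k. is_walk {0..<n} (cycle_adj n) p x y k"
  by (rule walk_conn) (auto simp: cycle_adj_def)

lemma walk0: "is_walk V E p x y 0 \<Longrightarrow> x = y"
  unfolding is_walk_def by (auto simp: length_Suc_conv)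

lemma walk1: "is_walk V E p x y 1 \<Longrightarrow> E x y"
  unfolding is_walk_def by (auto simp: length_Suc_conv)

lemma tier:
  fixes n :: nat
  assumes conn: "\<And>x y. x < n \<Longrightarrow> y < n \<Longrightarrow> \<exists>p k. is_walk {0..<n} E p x y k"
    and irr: "\<And>u. \<not> E u u" and x: "x < n" and z: "z < n"
  shows "tdist {0..<n} E 1 x z = (if x = z then 0 else if E x z then 1 else 2)"
proof -
  obtain p where p: "is_walk {0..<n} E p x z (gdist {0..<n} E x z)"
    using gdist_walk[OF conn[OF x z]] by blast
  show ?thesis
  proof (cases "x = z")
    case True
    have "is_walk {0..<n} E [x] x z 0" unfolding is_walk_def using True x by auto
    then have "gdist {0..<n} E x z = 0" using gdist_le by fastforce
    then show ?thesis using True unfolding tdist_def by simp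
  next
    case False
    then have g0: "gdist {0..<n} E x z \<noteq> 0" using p walk0 by metis
    show ?thesis
    proof (cases "E x z")
      case True
      have "is_walk {0..<n} E [x, z] x z 1" unfolding is_walk_def using True x z by auto
      then have "gdist {0..<n} E x z \<le> 1" using gdist_le by fastforce
      then have "gdist {0..<n} E x z = 1" using g0 by simp
      then show ?thesis using True False unfolding tdist_def by simp
    next
      case nE: False
      have "gdist {0..<n} E x z \<noteq> 1" using p walk1 nE by metis
      then have "gdist {0..<n} E x z \<ge> 2" using g0 by simp
      then show ?thesis using nE False unfolding tdist_def by simp
    qed
  qed
qed

lemma path_tier: "x < n \<Longrightarrow> z < n \<Longrightarrow> tdist {0..<n} (path_adj n) 1 x z = tierP x z"
  by (subst tier[OF path_conn]) (auto simp: path_adj_def tierP_def)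

lemma cycle_adj_iff: "x < n \<Longrightarrow> z < n \<Longrightarrow> x \<noteq> z \<Longrightarrow>
   cycle_adj n x z \<longleftrightarrow> (z = x+1 \<or> x = z+1 \<or> (x = 0 \<and> z + 1 = n) \<or> (z = 0 \<and> x + 1 = n))"
proof -
  assume x: "x < n" and z: "z < n" and ne: "x \<noteq> z"
  have a: "(x + 1) mod n = (if x + 1 = n then 0 else x + 1)" using x by auto
  have b: "(z + 1) mod n = (if z + 1 = n then 0 else z + 1)" using z by auto
  show ?thesis unfolding cycle_adj_def a b using x z ne by auto
qed

lemma cycle_tier: "x < n \<Longrightarrow> z < n \<Longrightarrow> tdist {0..<n} (cycle_adj n) 1 x z = tierC n x z"
proof -
  assume x: "x < n" and z: "z < n"
  have irr: "\<And>u. \<not> cycle_adj n u u" by (simp add: cycle_adj_def)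
  show ?thesis by (subst tier[OF cycle_conn irr x z]) (use x z in \<open>auto simp: cycle_adj_iff tierC_def\<close>)
qed

definition Fc :: "nat \<Rightarrow> nat \<Rightarrow> nat" where
  "Fc n x = (if n = 4 then (if x \<le> 1 then 1 else 0) else (if Fb n x then 1 else 0))"

lemma Fc_res:
  assumes n: "4 \<le> n" and x: "x < n" and y: "y < n" and xy: "x < y"
  shows "\<exists>z<n. Fc n z = 1 \<and> tierP x z \<noteq> tierP y z \<and> tierC n x z \<noteq> tierC n y z"
proof (cases "n = 4")
  case True
  then show ?thesis using comb4[OF xy] y unfolding Fc_def by auto
next
  case False
  then have "5 \<le> n" using n by simp
  from comb[OF this xy y] show ?thesis unfolding Fc_def using False by auto
qed

lemma Fc_rb_path: assumes n: "4 \<le> n" shows "resolving_broadcast {0..<n} (path_adj n) (Fc n)"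
  unfolding resolving_broadcast_def
proof (intro ballI impI)
  fix x y assume x: "x \<in> {0..<n}" and y: "y \<in> {0..<n}" and ne: "x \<noteq> y"
  have key: "\<exists>z<n. Fc n z = 1 \<and> tierP a z \<noteq> tierP b z" if "a < b" "b < n" for a b
    using Fc_res[OF n _ that(2) that(1)] that by fastforce
  from ne have "x < y \<or> y < x" by auto
  then obtain z where z: "z < n" "Fc n z = 1" "tierP x z \<noteq> tierP y z"
    using key x y by (metis atLeastLessThan_iff)
  then show "\<exists>z\<in>{0..<n}. 0 < Fc n z \<and> tdist {0..<n} (path_adj n) (Fc n z) x z \<noteq> tdist {0..<n} (path_adj n) (Fc n z) y z"
    using x y path_tier[of x n z] path_tier[of y n z] by (intro bexI[of _ z]) auto
qed

lemma Fc_rb_cycle: assumes n: "4 \<le> n" shows "resolving_broadcast {0..<n} (cycle_adj n) (Fc n)"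
  unfolding resolving_broadcast_def
proof (intro ballI impI)
  fix x y assume x: "x \<in> {0..<n}" and y: "y \<in> {0..<n}" and ne: "x \<noteq> y"
  have key: "\<exists>z<n. Fc n z = 1 \<and> tierC n a z \<noteq> tierC n b z" if "a < b" "b < n" for a b
    using Fc_res[OF n _ that(2) that(1)] that by fastforce
  from ne have "x < y \<or> y < x" by auto
  then obtain z where z: "z < n" "Fc n z = 1" "tierC n x z \<noteq> tierC n y z"
    using key x y by (metis atLeastLessThan_iff)
  then show "\<exists>z\<in>{0..<n}. 0 < Fc n z \<and> tdist {0..<n} (cycle_adj n) (Fc n z) x z \<noteq> tdist {0..<n} (cycle_adj n) (Fc n z) y z"
    using x y cycle_tier[of x n z] cycle_tier[of y n z] by (intro bexI[of _ z]) auto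
qed

lemma base_sum: "(\<Sum>x\<in>{0..<m}. if x mod 5 = 1 \<or> x mod 5 = 3 then 1 else 0::nat) = (2*m+2) div 5"
proof (induction m)
  case 0 then show ?case by simp
next
  case (Suc m)
  have "(2 * Suc m + 2) div 5 = (2*m+2) div 5 + (if m mod 5 = 1 \<or> m mod 5 = 3 then 1 else 0)"
    by presburger
  then show ?case using Suc by simp
qed

lemma Fc_sum: assumes n: "4 \<le> n" shows "(\<Sum>x\<in>{0..<n}. Fc n x) = (2*n+2) div 5"
proof (cases "n = 4")
  case True
  have e: "{0..<4::nat} = {0,1,2,3}" by auto
  have "(\<Sum>x\<in>{0..<4::nat}. Fc 4 x) = 2" unfolding e Fc_def by simp
  then show ?thesis using True by simp
next
  case False
  show ?thesis
  proof (cases "n mod 5 = 3")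
    case False
    have "(\<Sum>x\<in>{0..<n}. Fc n x) = (\<Sum>x\<in>{0..<n}. if x mod 5 = 1 \<or> x mod 5 = 3 then 1 else 0)"
      using False \<open>n \<noteq> 4\<close> by (intro sum.cong) (auto simp: Fc_def Fb_def)
    then show ?thesis using base_sum[of n] by simp
  next
    case True
    define m where "m = n - 3"
    have nm: "n = Suc (Suc (Suc m))" using True n unfolding m_def by presburger
    have mm: "m mod 5 = 0" using True nm by presburger
    have "(\<Sum>x\<in>{0..<m}. Fc n x) = (\<Sum>x\<in>{0..<m}. if x mod 5 = 1 \<or> x mod 5 = 3 then 1 else 0)"
      using \<open>n \<noteq> 4\<close> nm by (intro sum.cong) (auto simp: Fc_def Fb_def)
    also have "\<dots> = (2*m+2) div 5" by (rule base_sum)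
    finally have s: "(\<Sum>x\<in>{0..<m}. Fc n x) = (2*m+2) div 5" .
    have f0: "Fc n m = 0" using \<open>n \<noteq> 4\<close> nm mm unfolding Fc_def Fb_def by auto
    have f1: "Fc n (Suc m) = 0" using \<open>n \<noteq> 4\<close> nm mm unfolding Fc_def Fb_def by auto
    have f2: "Fc n (Suc (Suc m)) = 1" using \<open>n \<noteq> 4\<close> nm True unfolding Fc_def Fb_def by auto
    have "(\<Sum>x\<in>{0..<n}. Fc n x) = (2*m+2) div 5 + 1"
      unfolding nm sum.atLeast0_lessThan_Suc using s f0 f1 f2 nm by simp
    also have "\<dots> = (2*n+2) div 5" using nm mm by presburger
    finally show ?thesis .
  qed
qed

lemma bdim_eq:
  assumes n: "4 \<le> n"
    and st: "\<And>u v. E u v \<Longrightarrow> \<exists>t\<in>{1,-1::int}. int v mod int n = (int u + t) mod int n"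
    and conn: "\<And>x y. x < n \<Longrightarrow> y < n \<Longrightarrow> \<exists>p k. is_walk {0..<n} E p x y k"
    and rb: "resolving_broadcast {0..<n} E (Fc n)"
  shows "bdim {0..<n} E = (2 * n + 2) div 5"
  unfolding bdim_def
proof (rule Least_equality)
  show "\<exists>f. resolving_broadcast {0..<n} E f \<and> (\<Sum>v\<in>{0..<n}. f v) = (2 * n + 2) div 5"
    using rb Fc_sum[OF n] by blast
next
  fix s assume "\<exists>f. resolving_broadcast {0..<n} E f \<and> (\<Sum>v\<in>{0..<n}. f v) = s"
  then obtain f where f: "resolving_broadcast {0..<n} E f" "(\<Sum>v\<in>{0..<n}. f v) = s" by blast
  have "2 * n \<le> 5 * s + 2" using lower[OF st conn f(1)] f(2) by simp
  then show "(2 * n + 2) div 5 \<le> s" by presburger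
qed

theorem mainTheorem2:
  fixes n :: nat
  assumes "n \<ge> 4"
  shows "bdim {0..<n} (path_adj n) = (2 * n + 2) div 5
       \<and> bdim {0..<n} (cycle_adj n) = (2 * n + 2) div 5"
  using bdim_eq[OF assms path_step path_conn Fc_rb_path[OF assms]]
        bdim_eq[OF assms cycle_step cycle_conn Fc_rb_cycle[OF assms]] by blast

end
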